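(* Consider $f:\mathbb R^n\to\mathbb R$ convex and continuously differentiable, $A\in\mathbb R^{m\times n}$, $b\in\mathbb R^m$, with nonempty KKT set $\Omega$. Let $\{(x_k,\lambda_k)\}_{k\ge0}$ be generated by the algorithm described in the context, write $z_k=(x_k,\lambda_k)$, and fix $z^*=(x^*,\lambda^* )\in\Omega$. Define $H_k=\mathcal L_\beta(x_k,\lambda^* )-\mathcal L_\beta(x^*,\lambda^* )$, $w_k=\eta(z_k-z^* )+(t_k-1)(z_k-z_{k-1})$, $B_k=\frac12\|w_k\|_M^2+\frac{\eta(1-\eta)}2\|z_k-z^*\|_M^2$ and $\mathcal E_k=t_k^2H_k+B_k$ for $k\ge1$. Then, for both Case I and Case II and every $k\ge1$, $\mathcal E_{k+1}-\mathcal E_k\le(\rho-\eta)t_{k+1}H_k-(1-\eta)(t_{k+1}-\tfrac12)\|z_{k+1}-z_k\|_M^2$.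
   Context: The KKT set is $\Omega=\{(x^*,\lambda^* ): Ax^*=b,\ \nabla f(x^* )+A^\top\lambda^*=0\}$. $\mathcal L_\beta(x,\lambda)=f(x)+\langle\lambda,Ax-b\rangle+\frac\beta2\|Ax-b\|^2$. For $z=(x,\lambda)$, $\|z\|_M^2=\frac1\gamma\|x\|^2+\frac1\delta\|\lambda\|^2$. Parameter sequence: $\{t_k\}_{k\ge1}$ is nondecreasing, $t_1=1$, $t_k>1$ for all $k>2$, $t_k\to+\infty$, and $t_{k+1}^2-t_k^2\le\rho t_{k+1}$ for all $k\ge 1$, with fixed $\rho\in(0,1]$. Fix $\eta\in[\rho,1]$, $\gamma>0$, $\delta>0$, $\beta\ge0$. Algorithm: initial points $x_0=x_1\in\mathbb R^n$, $\lambda_0=\lambda_1\in\mathbb R^m$. For $k=1,2,\dots$: set $\alpha_k=(t_{k+1}-\eta)/\eta$, $c_k=t_{k+1}/\eta$, $\bar x_k=x_k+\frac{t_k-1}{t_{k+1}}(x_k-x_{k-1})$, $\bar\lambda_k=\lambda_k+\frac{t_k-1}{t_{k+1}}(\lambda_k-\lambda_{k-1})$, $p_k=c_k\bar\lambda_k-\alpha_k\lambda_k$, $r_k=\alpha_kAx_k+b$. Case I ($f$ convex and $C^1$): $x_{k+1}=\arg\min_{x}\{f(x)+\frac\beta2\|Ax-b\|^2+\frac1{2\gamma}\|x-\bar x_k\|^2+\langle p_k,Ax-b\rangle+\frac\delta2\|c_kAx-r_k\|^2\}$. Case II ($f$ convex with $L$-Lipschitz gradient, and $\gamma\le 1/L$):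 $x_{k+1}=\arg\min_{x}\{\langle\nabla f(\bar x_k),x\rangle+\frac\beta2\|Ax-b\|^2+\frac1{2\gamma}\|x-\bar x_k\|^2+\langle p_k,Ax-b\rangle+\frac\delta2\|c_kAx-r_k\|^2\}$. Then $\lambda_{k+1}=\bar\lambda_k+\delta(c_kAx_{k+1}-r_k)$. *)

theory Defs
  imports "HOL-Analysis.Analysis"
begin

definition aug_lag ::
  "(real^'n \<Rightarrow> real) \<Rightarrow> real^'n^'m \<Rightarrow> real^'m \<Rightarrow> real \<Rightarrow> real^'n \<Rightarrow> real^'m \<Rightarrow> real" where
  "aug_lag f A b \<beta> x l = f x + l \<bullet> (A *v x - b) + \<beta> / 2 * (norm (A *v x - b))\<^sup>2"

definition Mnorm2 :: "real \<Rightarrow> real \<Rightarrow> real^'n \<Rightarrow> real^'m \<Rightarrow> real" where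
  "Mnorm2 \<gamma> \<delta> x l = (1 / \<gamma>) * (norm x)\<^sup>2 + (1 / \<delta>) * (norm l)\<^sup>2"

definition KKT :: "(real^'n \<Rightarrow> real^'n) \<Rightarrow> real^'n^'m \<Rightarrow> real^'m \<Rightarrow> ((real^'n) \<times> (real^'m)) set" where
  "KKT g A b = {(x, l). A *v x = b \<and> g x + transpose A *v l = 0}"

text \<open>Case I subproblem objective (xb = bar x_k, p = p_k, c = c_k, r = r_k).\<close>
definition phiI ::
  "(real^'n \<Rightarrow> real) \<Rightarrow> real^'n^'m \<Rightarrow> real^'m \<Rightarrow> real \<Rightarrow> real \<Rightarrow> real \<Rightarrow>
   real^'n \<Rightarrow> real^'m \<Rightarrow> real \<Rightarrow> real^'m \<Rightarrow> real^'n \<Rightarrow> real" where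
  "phiI f A b \<beta> \<gamma> \<delta> xb p c r x =
     f x + \<beta> / 2 * (norm (A *v x - b))\<^sup>2 + 1 / (2 * \<gamma>) * (norm (x - xb))\<^sup>2
     + p \<bullet> (A *v x - b) + \<delta> / 2 * (norm (c *\<^sub>R (A *v x) - r))\<^sup>2"

text \<open>Case II subproblem objective (linearised f at xb; g is the gradient of f).\<close>
definition phiII ::
  "(real^'n \<Rightarrow> real^'n) \<Rightarrow> real^'n^'m \<Rightarrow> real^'m \<Rightarrow> real \<Rightarrow> real \<Rightarrow> real \<Rightarrow>
   real^'n \<Rightarrow> real^'m \<Rightarrow> real \<Rightarrow> real^'m \<Rightarrow> real^'n \<Rightarrow> real" where
  "phiII g A b \<beta> \<gamma> \<delta> xb p c r x =
     g xb \<bullet> x + \<beta> / 2 * (norm (A *v x - b))\<^sup>2 + 1 / (2 * \<gamma>) * (norm (x - xb))\<^sup>2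
     + p \<bullet> (A *v x - b) + \<delta> / 2 * (norm (c *\<^sub>R (A *v x) - r))\<^sup>2"

end

theory Submission
  imports Defs
begin

lemma core_id:
  fixes d e q :: "'a::real_inner"
  assumes "t > 0"
  shows "t * ( - ((d - ((s-1)/t) *\<^sub>R q) \<bullet> (t *\<^sub>R d + \<eta> *\<^sub>R e))
      + t/2 * (norm (d - ((s-1)/t) *\<^sub>R q))\<^sup>2 )
  + (1/2 * (norm (\<eta> *\<^sub>R (d + e) + (t-1) *\<^sub>R d))\<^sup>2 + \<eta>*(1-\<eta>)/2 * (norm (d + e))\<^sup>2)
  - (1/2 * (norm (\<eta> *\<^sub>R e + (s-1) *\<^sub>R q))\<^sup>2 + \<eta>*(1-\<eta>)/2 * (norm e)\<^sup>2)
  = -(1-\<eta>)*(t-1/2) * (norm d)\<^sup>2"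
  unfolding power2_norm_eq_inner
  using assms
  by (simp add: inner_add_left inner_add_right inner_diff_left inner_diff_right inner_commute field_simps power2_eq_square)

lemma comp_id:
  fixes x0 xk x1 xs :: "'a::real_inner"
  assumes "t > 0"
  shows "t * ( - ((x1 - (xk + ((s-1)/t) *\<^sub>R (xk - x0))) \<bullet> (t *\<^sub>R (x1-xk) + \<eta> *\<^sub>R (xk - xs)))
      + t/2 * (norm (x1 - (xk + ((s-1)/t) *\<^sub>R (xk - x0))))\<^sup>2 )
  + (1/2 * (norm (\<eta> *\<^sub>R (x1-xs) + (t-1) *\<^sub>R (x1-xk)))\<^sup>2 + \<eta>*(1-\<eta>)/2 * (norm (x1-xs))\<^sup>2)
  - (1/2 * (norm (\<eta> *\<^sub>R (xk-xs) + (s-1) *\<^sub>R (xk-x0)))\<^sup>2 + \<eta>*(1-\<eta>)/2 * (norm (xk-xs))\<^sup>2)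
  = -(1-\<eta>)*(t-1/2) * (norm (x1-xk))\<^sup>2"
proof -
  have 1: "x1 - (xk + ((s-1)/t) *\<^sub>R (xk - x0)) = (x1 - xk) - ((s-1)/t) *\<^sub>R (xk - x0)" by simp
  have 2: "x1 - xs = (x1 - xk) + (xk - xs)" by simp
  show ?thesis unfolding 1 2 by (rule core_id[OF assms])
qed

lemma line_deriv:
  fixes f :: "'a::real_inner \<Rightarrow> real"
  assumes d: "\<And>y. GDERIV f y :> g y"
  shows "((\<lambda>s. f (x + s *\<^sub>R v)) has_field_derivative (g (x + s *\<^sub>R v) \<bullet> v)) (at s within S)"
proof -
  have a: "((\<lambda>s. x + s *\<^sub>R v) has_derivative (\<lambda>h. h *\<^sub>R v)) (at s within S)"
    by (auto intro!: derivative_eq_intros)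
  have b: "(f has_derivative (\<lambda>h. h \<bullet> g (x + s *\<^sub>R v))) (at (x + s *\<^sub>R v))"
    using d by (simp add: gderiv_def)
  have "((\<lambda>s. f (x + s *\<^sub>R v)) has_derivative (\<lambda>h. (h *\<^sub>R v) \<bullet> g (x + s *\<^sub>R v))) (at s within S)"
    using has_derivative_compose[OF a b] by simp
  moreover have "(\<lambda>h. (h *\<^sub>R v) \<bullet> g (x + s *\<^sub>R v)) = (*) (g (x + s *\<^sub>R v) \<bullet> v)"
    by (auto simp: fun_eq_iff inner_commute)
  ultimately show ?thesis
    by (simp add: has_field_derivative_def)
qed

lemma grad_ineq:
  fixes f :: "'a::real_inner \<Rightarrow> real"
  assumes cv: "convex_on UNIV f" and d: "\<And>y. GDERIV f y :> g y"
  shows "f x + g x \<bullet> (y - x) \<le> f y"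
proof -
  define h where "h = (\<lambda>s::real. f (x + s *\<^sub>R (y - x)))"
  have hc: "convex_on UNIV h"
  proof (rule convex_onI)
    fix \<tau> a c :: real assume "\<tau> > 0" "\<tau> < 1"
    have "x + ((1 - \<tau>) * a + \<tau> * c) *\<^sub>R (y - x) = (1 - \<tau>) *\<^sub>R (x + a *\<^sub>R (y - x)) + \<tau> *\<^sub>R (x + c *\<^sub>R (y - x))"
      by (simp add: algebra_simps)
    then show "h ((1 - \<tau>) *\<^sub>R a + \<tau> *\<^sub>R c) \<le> (1 - \<tau>) * h a + \<tau> * h c"
      unfolding h_def using convex_onD[OF cv, of \<tau> "x + a *\<^sub>R (y - x)" "x + c *\<^sub>R (y - x)"] \<open>\<tau> > 0\<close> \<open>\<tau> < 1\<close>
      by simp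
  qed simp
  have "h 1 - h 0 \<ge> (g (x + 0 *\<^sub>R (y - x)) \<bullet> (y - x)) * (1 - 0)"
  proof (rule convex_on_imp_above_tangent[OF hc])
    show "(h has_field_derivative g (x + 0 *\<^sub>R (y - x)) \<bullet> (y - x)) (at 0 within UNIV)"
      unfolding h_def by (rule line_deriv[OF d])
  qed auto
  then show ?thesis by (simp add: h_def)
qed

lemma descent:
  fixes f :: "'a::real_inner \<Rightarrow> real"
  assumes d: "\<And>y. GDERIV f y :> g y" and L: "L \<ge> 0"
    and lip: "\<forall>y z. norm (g y - g z) \<le> L * norm (y - z)"
  shows "f y \<le> f x + g x \<bullet> (y - x) + L / 2 * (norm (y - x))\<^sup>2"
proof -
  define v where "v = y - x"
  define \<phi> where "\<phi> = (\<lambda>s::real. f (x + s *\<^sub>R v) - s * (g x \<bullet> v) - L / 2 * s\<^sup>2 * (norm v)\<^sup>2)"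
  have key: "\<exists>y. DERIV \<phi> s :> y \<and> y \<le> 0" if s: "0 \<le> s" "s \<le> 1" for s
  proof -
    have D: "DERIV \<phi> s :> (g (x + s *\<^sub>R v) \<bullet> v - g x \<bullet> v - L * s * (norm v)\<^sup>2)"
      unfolding \<phi>_def
      by (rule derivative_eq_intros line_deriv[OF d] refl | simp)+
    have "g (x + s *\<^sub>R v) \<bullet> v - g x \<bullet> v = (g (x + s *\<^sub>R v) - g x) \<bullet> v" by (simp add: inner_diff_left)
    also have "\<dots> \<le> norm (g (x + s *\<^sub>R v) - g x) * norm v" by (rule norm_cauchy_schwarz)
    also have "\<dots> \<le> (L * norm (s *\<^sub>R v)) * norm v"
      using lip[rule_format, of "x + s *\<^sub>R v" x] by (simp add: mult_right_mono)
    also have "\<dots> = L * s * (norm v)\<^sup>2" using s by (simp add: power2_eq_square)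
    finally have "g (x + s *\<^sub>R v) \<bullet> v - g x \<bullet> v - L * s * (norm v)\<^sup>2 \<le> 0" by simp
    then show "\<exists>y. DERIV \<phi> s :> y \<and> y \<le> 0" using D by blast
  qed
  have "\<phi> 0 \<ge> \<phi> 1" by (rule DERIV_nonpos_imp_nonincreasing) (auto intro: key)
  then show ?thesis by (simp add: \<phi>_def v_def)
qed

lemma fermat:
  assumes "(\<phi> has_derivative D) (at (y::'a::real_normed_vector))" "\<forall>z. \<phi> y \<le> \<phi> z"
  shows "D h = (0::real)"
  using differential_zero_maxmin[of y UNIV \<phi> D] assms by simp


lemma mv_lin: "bounded_linear ((*v) (A::real^'n^'m))"
  by simp

lemma phiI_deriv:
  assumes "GDERIV f y :> gy"
  shows "(phiI f A b \<beta> \<gamma> \<delta> xb p c r has_derivative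
     (\<lambda>h. h \<bullet> gy + \<beta> * ((A *v y - b) \<bullet> (A *v h)) + (1/\<gamma>) * ((y - xb) \<bullet> h)
        + p \<bullet> (A *v h) + \<delta> * c * ((c *\<^sub>R (A *v y) - r) \<bullet> (A *v h)))) (at y)"
proof -
  have f: "(f has_derivative (\<lambda>h. h \<bullet> gy)) (at y)" using assms by (simp add: gderiv_def)
  have L: "((\<lambda>x. A *v x) has_derivative (\<lambda>h. A *v h)) (at y)"
    using bounded_linear.has_derivative[OF mv_lin[of A], OF has_derivative_ident[of "at y"]] by simp
  show ?thesis
    unfolding phiI_def power2_norm_eq_inner
    apply (rule has_derivative_eq_rhs)
     apply (rule derivative_intros f L | assumption)+
    apply (simp add: fun_eq_iff inner_commute algebra_simps inner_add_right inner_diff_right)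
    done
qed

lemma phiII_eq: "phiII g A b \<beta> \<gamma> \<delta> xb p c r = phiI (\<lambda>z. g xb \<bullet> z) A b \<beta> \<gamma> \<delta> xb p c r"
  by (simp add: fun_eq_iff phiI_def phiII_def)

lemma gderiv_lin: "GDERIV (\<lambda>z. (a::'a::real_inner) \<bullet> z) y :> a"
proof -
  have "((\<lambda>z. a \<bullet> z) has_derivative (\<lambda>h. a \<bullet> h)) (at y)"
    by (rule bounded_linear.has_derivative[OF bounded_linear_inner_right has_derivative_ident])
  then show ?thesis by (simp add: gderiv_def inner_commute)
qed


theorem lemma3p2:
  fixes f :: "real^'n \<Rightarrow> real" and g :: "real^'n \<Rightarrow> real^'n"
    and A :: "real^'n^'m" and b :: "real^'m"
    and t :: "nat \<Rightarrow> real" and \<rho> \<eta> \<gamma> \<delta> \<beta> :: real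
    and x :: "nat \<Rightarrow> real^'n" and lam :: "nat \<Rightarrow> real^'m"
    and xs :: "real^'n" and ls :: "real^'m"
  assumes f_convex: "convex_on UNIV f"
    and f_grad: "\<And>y. GDERIV f y :> g y"
    and g_cont: "continuous_on UNIV g"
    and t_mono: "\<And>k. k \<ge> 1 \<Longrightarrow> t k \<le> t (Suc k)"
    and t1: "t 1 = 1"
    and t_gt: "\<And>k. k > 2 \<Longrightarrow> t k > 1"
    and t_lim: "filterlim t at_top sequentially"
    and t_rate: "\<And>k. k \<ge> 1 \<Longrightarrow> (t (Suc k))\<^sup>2 - (t k)\<^sup>2 \<le> \<rho> * t (Suc k)"
    and rho: "0 < \<rho>" "\<rho> \<le> 1"
    and eta: "\<rho> \<le> \<eta>" "\<eta> \<le> 1"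
    and gamma: "\<gamma> > 0" and delta: "\<delta> > 0" and beta: "\<beta> \<ge> 0"
    and x0: "x 0 = x 1" and lam0: "lam 0 = lam 1"
    and step: "(\<forall>k\<ge>1. \<forall>y.
                 phiI f A b \<beta> \<gamma> \<delta>
                   (x k + ((t k - 1) / t (Suc k)) *\<^sub>R (x k - x (k - 1)))
                   ((t (Suc k) / \<eta>) *\<^sub>R (lam k + ((t k - 1) / t (Suc k)) *\<^sub>R (lam k - lam (k - 1)))
                     - ((t (Suc k) - \<eta>) / \<eta>) *\<^sub>R lam k)
                   (t (Suc k) / \<eta>)
                   (((t (Suc k) - \<eta>) / \<eta>) *\<^sub>R (A *v x k) + b)
                   (x (Suc k))
                 \<le> phiI f A b \<beta> \<gamma> \<delta>
                   (x k + ((t k - 1) / t (Suc k)) *\<^sub>R (x k - x (k - 1)))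
                   ((t (Suc k) / \<eta>) *\<^sub>R (lam k + ((t k - 1) / t (Suc k)) *\<^sub>R (lam k - lam (k - 1)))
                     - ((t (Suc k) - \<eta>) / \<eta>) *\<^sub>R lam k)
                   (t (Suc k) / \<eta>)
                   (((t (Suc k) - \<eta>) / \<eta>) *\<^sub>R (A *v x k) + b)
                   y)
             \<or> (\<exists>L>0. (\<forall>y z. norm (g y - g z) \<le> L * norm (y - z)) \<and> \<gamma> \<le> 1 / L \<and>
                 (\<forall>k\<ge>1. \<forall>y.
                 phiII g A b \<beta> \<gamma> \<delta>
                   (x k + ((t k - 1) / t (Suc k)) *\<^sub>R (x k - x (k - 1)))
                   ((t (Suc k) / \<eta>) *\<^sub>R (lam k + ((t k - 1) / t (Suc k)) *\<^sub>R (lam k - lam (k - 1)))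
                     - ((t (Suc k) - \<eta>) / \<eta>) *\<^sub>R lam k)
                   (t (Suc k) / \<eta>)
                   (((t (Suc k) - \<eta>) / \<eta>) *\<^sub>R (A *v x k) + b)
                   (x (Suc k))
                 \<le> phiII g A b \<beta> \<gamma> \<delta>
                   (x k + ((t k - 1) / t (Suc k)) *\<^sub>R (x k - x (k - 1)))
                   ((t (Suc k) / \<eta>) *\<^sub>R (lam k + ((t k - 1) / t (Suc k)) *\<^sub>R (lam k - lam (k - 1)))
                     - ((t (Suc k) - \<eta>) / \<eta>) *\<^sub>R lam k)
                   (t (Suc k) / \<eta>)
                   (((t (Suc k) - \<eta>) / \<eta>) *\<^sub>R (A *v x k) + b)
                   y))"
    and lam_step: "\<And>k. k \<ge> 1 \<Longrightarrow>
       lam (Suc k) = (lam k + ((t k - 1) / t (Suc k)) *\<^sub>R (lam k - lam (k - 1)))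
         + \<delta> *\<^sub>R ((t (Suc k) / \<eta>) *\<^sub>R (A *v x (Suc k))
                    - (((t (Suc k) - \<eta>) / \<eta>) *\<^sub>R (A *v x k) + b))"
    and kkt: "(xs, ls) \<in> KKT g A b"
  shows "\<forall>k\<ge>1.
    (let H = (\<lambda>j. aug_lag f A b \<beta> (x j) ls - aug_lag f A b \<beta> xs ls);
         B = (\<lambda>j. 1 / 2 * Mnorm2 \<gamma> \<delta>
                    (\<eta> *\<^sub>R (x j - xs) + (t j - 1) *\<^sub>R (x j - x (j - 1)))
                    (\<eta> *\<^sub>R (lam j - ls) + (t j - 1) *\<^sub>R (lam j - lam (j - 1)))
                  + \<eta> * (1 - \<eta>) / 2 * Mnorm2 \<gamma> \<delta> (x j - xs) (lam j - ls));
         E = (\<lambda>j. (t j)\<^sup>2 * H j + B j)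
     in E (Suc k) - E k \<le> (\<rho> - \<eta>) * t (Suc k) * H k
          - (1 - \<eta>) * (t (Suc k) - 1 / 2) * Mnorm2 \<gamma> \<delta> (x (Suc k) - x k) (lam (Suc k) - lam k))"
proof (intro allI impI)
  fix k :: nat assume k: "1 \<le> k"
  have tge: "1 \<le> t j" if "1 \<le> j" for j
    using that
  proof (induction j)
    case 0 then show ?case by simp
  next
    case (Suc j)
    show ?case
    proof (cases "j = 0")
      case True then show ?thesis using t1 by simp
    next
      case False then show ?thesis using Suc t_mono[of j] by simp
    qed
  qed
  have eta0: "\<eta> > 0" using rho eta by linarith
  define T where "T = t (Suc k)"
  define S where "S = t k"
  have T1: "T \<ge> 1" unfolding T_def using tge by simp
  have S1: "S \<ge> 1" unfolding S_def using tge k by simp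
  have Tpos: "T > 0" and Teta: "T \<ge> \<eta>" using T1 eta by linarith+
  define xb where "xb = x k + ((t k - 1) / t (Suc k)) *\<^sub>R (x k - x (k - 1))"
  define lb where "lb = lam k + ((t k - 1) / t (Suc k)) *\<^sub>R (lam k - lam (k - 1))"
  define p where "p = (t (Suc k) / \<eta>) *\<^sub>R lb - ((t (Suc k) - \<eta>) / \<eta>) *\<^sub>R lam k"
  define c where "c = t (Suc k) / \<eta>"
  define r where "r = ((t (Suc k) - \<eta>) / \<eta>) *\<^sub>R (A *v x k) + b"
  have Axs: "A *v xs = b" and gxs: "g xs + transpose A *v ls = 0" using kkt by (auto simp: KKT_def)
  have tr: "(transpose A *v ls) \<bullet> h = ls \<bullet> (A *v h)" for h
    by (metis transpose_transpose vector_transpose_matrix dot_lmul_matrix)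
  have gxs': "g xs \<bullet> h = - (ls \<bullet> (A *v h))" for h
  proof -
    have "g xs = - (transpose A *v ls)" using gxs by (simp add: eq_neg_iff_add_eq_0)
    then show ?thesis using tr by simp
  qed
  define v where "v = T *\<^sub>R (x (Suc k) - x k) + \<eta> *\<^sub>R (x k - xs)"
  have vsplit: "v = (T - \<eta>) *\<^sub>R (x (Suc k) - x k) + \<eta> *\<^sub>R (x (Suc k) - xs)"
    unfolding v_def by (simp add: algebra_simps)
  have Z: "\<exists>\<zeta>. (T - \<eta>) * (f (x (Suc k)) - f (x k)) + \<eta> * (f (x (Suc k)) - f xs)
             \<le> v \<bullet> \<zeta> + T / (2 * \<gamma>) * (norm (x (Suc k) - xb))\<^sup>2
          \<and> v \<bullet> \<zeta> + \<beta> * ((A *v x (Suc k) - b) \<bullet> (A *v v)) + (1/\<gamma>) * ((x (Suc k) - xb) \<bullet> v)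
              + p \<bullet> (A *v v) + \<delta> * c * ((c *\<^sub>R (A *v x (Suc k)) - r) \<bullet> (A *v v)) = 0"
    using step
  proof
    assume s1: "\<forall>k\<ge>1. \<forall>y. phiI f A b \<beta> \<gamma> \<delta>
                   (x k + ((t k - 1) / t (Suc k)) *\<^sub>R (x k - x (k - 1)))
                   ((t (Suc k) / \<eta>) *\<^sub>R (lam k + ((t k - 1) / t (Suc k)) *\<^sub>R (lam k - lam (k - 1)))
                     - ((t (Suc k) - \<eta>) / \<eta>) *\<^sub>R lam k)
                   (t (Suc k) / \<eta>)
                   (((t (Suc k) - \<eta>) / \<eta>) *\<^sub>R (A *v x k) + b)
                   (x (Suc k))
                 \<le> phiI f A b \<beta> \<gamma> \<delta>
                   (x k + ((t k - 1) / t (Suc k)) *\<^sub>R (x k - x (k - 1)))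
                   ((t (Suc k) / \<eta>) *\<^sub>R (lam k + ((t k - 1) / t (Suc k)) *\<^sub>R (lam k - lam (k - 1)))
                     - ((t (Suc k) - \<eta>) / \<eta>) *\<^sub>R lam k)
                   (t (Suc k) / \<eta>)
                   (((t (Suc k) - \<eta>) / \<eta>) *\<^sub>R (A *v x k) + b)
                   y"
    have mn: "\<forall>y. phiI f A b \<beta> \<gamma> \<delta> xb p c r (x (Suc k)) \<le> phiI f A b \<beta> \<gamma> \<delta> xb p c r y"
      using s1 k unfolding xb_def p_def lb_def c_def r_def by blast
    have eq: "v \<bullet> g (x (Suc k)) + \<beta> * ((A *v x (Suc k) - b) \<bullet> (A *v v)) + (1/\<gamma>) * ((x (Suc k) - xb) \<bullet> v)
              + p \<bullet> (A *v v) + \<delta> * c * ((c *\<^sub>R (A *v x (Suc k)) - r) \<bullet> (A *v v)) = 0"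
      using fermat[OF phiI_deriv[OF f_grad] mn] by simp
    have g1: "f (x (Suc k)) + g (x (Suc k)) \<bullet> (x k - x (Suc k)) \<le> f (x k)"
      by (rule grad_ineq[OF f_convex f_grad])
    have g2: "f (x (Suc k)) + g (x (Suc k)) \<bullet> (xs - x (Suc k)) \<le> f xs"
      by (rule grad_ineq[OF f_convex f_grad])
    have "v \<bullet> g (x (Suc k)) = (T - \<eta>) * (g (x (Suc k)) \<bullet> (x (Suc k) - x k)) + \<eta> * (g (x (Suc k)) \<bullet> (x (Suc k) - xs))"
      unfolding vsplit inner_add_left inner_scaleR_left by (simp add: inner_commute)
    moreover have i1: "f (x (Suc k)) - f (x k) \<le> g (x (Suc k)) \<bullet> (x (Suc k) - x k)"
      using g1 by (simp add: inner_diff_right)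
    moreover have i2: "f (x (Suc k)) - f xs \<le> g (x (Suc k)) \<bullet> (x (Suc k) - xs)"
      using g2 by (simp add: inner_diff_right)
    moreover have "(T - \<eta>) * (f (x (Suc k)) - f (x k)) \<le> (T - \<eta>) * (g (x (Suc k)) \<bullet> (x (Suc k) - x k))"
      using i1 Teta by (intro mult_left_mono) auto
    moreover have "\<eta> * (f (x (Suc k)) - f xs) \<le> \<eta> * (g (x (Suc k)) \<bullet> (x (Suc k) - xs))"
      using i2 eta0 by (intro mult_left_mono) auto
    moreover have "0 \<le> T / (2 * \<gamma>) * (norm (x (Suc k) - xb))\<^sup>2" using Tpos gamma by simp
    ultimately show ?thesis using eq by (intro exI[of _ "g (x (Suc k))"]) linarith
  next
    assume "\<exists>L>0. (\<forall>y z. norm (g y - g z) \<le> L * norm (y - z)) \<and> \<gamma> \<le> 1 / L \<and>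
                 (\<forall>k\<ge>1. \<forall>y.
                 phiII g A b \<beta> \<gamma> \<delta>
                   (x k + ((t k - 1) / t (Suc k)) *\<^sub>R (x k - x (k - 1)))
                   ((t (Suc k) / \<eta>) *\<^sub>R (lam k + ((t k - 1) / t (Suc k)) *\<^sub>R (lam k - lam (k - 1)))
                     - ((t (Suc k) - \<eta>) / \<eta>) *\<^sub>R lam k)
                   (t (Suc k) / \<eta>)
                   (((t (Suc k) - \<eta>) / \<eta>) *\<^sub>R (A *v x k) + b)
                   (x (Suc k))
                 \<le> phiII g A b \<beta> \<gamma> \<delta>
                   (x k + ((t k - 1) / t (Suc k)) *\<^sub>R (x k - x (k - 1)))
                   ((t (Suc k) / \<eta>) *\<^sub>R (lam k + ((t k - 1) / t (Suc k)) *\<^sub>R (lam k - lam (k - 1)))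
                     - ((t (Suc k) - \<eta>) / \<eta>) *\<^sub>R lam k)
                   (t (Suc k) / \<eta>)
                   (((t (Suc k) - \<eta>) / \<eta>) *\<^sub>R (A *v x k) + b)
                   y)"
    then obtain L where L0: "L > 0" and lip: "\<forall>y z. norm (g y - g z) \<le> L * norm (y - z)"
      and gL: "\<gamma> \<le> 1 / L" and s2: "\<forall>k\<ge>1. \<forall>y.
                 phiII g A b \<beta> \<gamma> \<delta>
                   (x k + ((t k - 1) / t (Suc k)) *\<^sub>R (x k - x (k - 1)))
                   ((t (Suc k) / \<eta>) *\<^sub>R (lam k + ((t k - 1) / t (Suc k)) *\<^sub>R (lam k - lam (k - 1)))
                     - ((t (Suc k) - \<eta>) / \<eta>) *\<^sub>R lam k)
                   (t (Suc k) / \<eta>)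
                   (((t (Suc k) - \<eta>) / \<eta>) *\<^sub>R (A *v x k) + b)
                   (x (Suc k))
                 \<le> phiII g A b \<beta> \<gamma> \<delta>
                   (x k + ((t k - 1) / t (Suc k)) *\<^sub>R (x k - x (k - 1)))
                   ((t (Suc k) / \<eta>) *\<^sub>R (lam k + ((t k - 1) / t (Suc k)) *\<^sub>R (lam k - lam (k - 1)))
                     - ((t (Suc k) - \<eta>) / \<eta>) *\<^sub>R lam k)
                   (t (Suc k) / \<eta>)
                   (((t (Suc k) - \<eta>) / \<eta>) *\<^sub>R (A *v x k) + b)
                   y" by blast
    have mn: "\<forall>y. phiI (\<lambda>z. g xb \<bullet> z) A b \<beta> \<gamma> \<delta> xb p c r (x (Suc k)) \<le> phiI (\<lambda>z. g xb \<bullet> z) A b \<beta> \<gamma> \<delta> xb p c r y"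
      using s2 k unfolding xb_def p_def lb_def c_def r_def phiII_eq by blast
    have eq: "v \<bullet> g xb + \<beta> * ((A *v x (Suc k) - b) \<bullet> (A *v v)) + (1/\<gamma>) * ((x (Suc k) - xb) \<bullet> v)
              + p \<bullet> (A *v v) + \<delta> * c * ((c *\<^sub>R (A *v x (Suc k)) - r) \<bullet> (A *v v)) = 0"
      using fermat[OF phiI_deriv[OF gderiv_lin] mn] by simp
    have Lg: "L \<le> 1 / \<gamma>" using gL L0 gamma by (simp add: field_simps)
    have dsc: "f (x (Suc k)) \<le> f xb + g xb \<bullet> (x (Suc k) - xb) + L / 2 * (norm (x (Suc k) - xb))\<^sup>2"
      by (rule descent[OF f_grad _ lip]) (use L0 in simp)
    have "L / 2 * (norm (x (Suc k) - xb))\<^sup>2 \<le> (1 / \<gamma>) / 2 * (norm (x (Suc k) - xb))\<^sup>2"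
      using Lg by (intro mult_right_mono) auto
    then have dsc': "f (x (Suc k)) \<le> f xb + g xb \<bullet> (x (Suc k) - xb) + 1 / (2 * \<gamma>) * (norm (x (Suc k) - xb))\<^sup>2"
      using dsc by simp
    have g1: "f xb + g xb \<bullet> (x k - xb) \<le> f (x k)"
      by (rule grad_ineq[OF f_convex f_grad])
    have g2: "f xb + g xb \<bullet> (xs - xb) \<le> f xs"
      by (rule grad_ineq[OF f_convex f_grad])
    define N where "N = 1 / (2 * \<gamma>) * (norm (x (Suc k) - xb))\<^sup>2"
    have i1: "f (x (Suc k)) - f (x k) \<le> g xb \<bullet> (x (Suc k) - x k) + N"
      using dsc' g1 unfolding N_def by (simp add: inner_diff_right)
    have i2: "f (x (Suc k)) - f xs \<le> g xb \<bullet> (x (Suc k) - xs) + N"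
      using dsc' g2 unfolding N_def by (simp add: inner_diff_right)
    have "v \<bullet> g xb = (T - \<eta>) * (g xb \<bullet> (x (Suc k) - x k)) + \<eta> * (g xb \<bullet> (x (Suc k) - xs))"
      unfolding vsplit inner_add_left inner_scaleR_left by (simp add: inner_commute)
    moreover have "(T - \<eta>) * (f (x (Suc k)) - f (x k)) \<le> (T - \<eta>) * (g xb \<bullet> (x (Suc k) - x k) + N)"
      using i1 Teta by (intro mult_left_mono) auto
    moreover have "\<eta> * (f (x (Suc k)) - f xs) \<le> \<eta> * (g xb \<bullet> (x (Suc k) - xs) + N)"
      using i2 eta0 by (intro mult_left_mono) auto
    moreover have "T / (2 * \<gamma>) * (norm (x (Suc k) - xb))\<^sup>2 = T * N" unfolding N_def by simp
    ultimately show ?thesis using eq by (intro exI[of _ "g xb"]) (simp add: algebra_simps)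
  qed
  then obtain \<zeta> where Z1: "(T - \<eta>) * (f (x (Suc k)) - f (x k)) + \<eta> * (f (x (Suc k)) - f xs)
             \<le> v \<bullet> \<zeta> + T / (2 * \<gamma>) * (norm (x (Suc k) - xb))\<^sup>2"
    and Z2: "v \<bullet> \<zeta> + \<beta> * ((A *v x (Suc k) - b) \<bullet> (A *v v)) + (1/\<gamma>) * ((x (Suc k) - xb) \<bullet> v)
              + p \<bullet> (A *v v) + \<delta> * c * ((c *\<^sub>R (A *v x (Suc k)) - r) \<bullet> (A *v v)) = 0" by blast
  define r1 where "r1 = A *v x (Suc k) - b"
  define rk where "rk = A *v x k - b"
  have Av: "A *v v = T *\<^sub>R r1 - (T - \<eta>) *\<^sub>R rk"
    unfolding v_def r1_def rk_def
    by (simp add: matrix_vector_right_distrib matrix_vector_mult_diff_distrib matrix_vector_mult_scaleR Axs vec_eq_iff algebra_simps)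
  have lam1: "A *v v = (\<eta> / \<delta>) *\<^sub>R (lam (Suc k) - lb)"
    unfolding Av lam_step[OF k] lb_def[symmetric] T_def r1_def rk_def
    using eta0 delta by (simp add: vec_eq_iff field_simps)
  have pc: "p + (\<delta> * c) *\<^sub>R (c *\<^sub>R (A *v x (Suc k)) - r) = c *\<^sub>R lam (Suc k) - ((T - \<eta>) / \<eta>) *\<^sub>R lam k"
    unfolding lam_step[OF k] lb_def[symmetric] p_def c_def r_def T_def
    using eta0 by (simp add: vec_eq_iff field_simps)
  define vl where "vl = T *\<^sub>R (lam (Suc k) - lam k) + \<eta> *\<^sub>R (lam k - ls)"
  have cl: "c *\<^sub>R lam (Suc k) - ((T - \<eta>) / \<eta>) *\<^sub>R lam k = ls + (1 / \<eta>) *\<^sub>R vl"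
    unfolding c_def vl_def T_def using eta0 by (simp add: vec_eq_iff field_simps)
  have Z2': "v \<bullet> \<zeta> = - \<beta> * (r1 \<bullet> (A *v v)) - (1/\<gamma>) * ((x (Suc k) - xb) \<bullet> v)
      - ls \<bullet> (A *v v) - (1/\<delta>) * ((lam (Suc k) - lb) \<bullet> vl)"
  proof -
    have "p \<bullet> (A *v v) + \<delta> * c * ((c *\<^sub>R (A *v x (Suc k)) - r) \<bullet> (A *v v))
        = (p + (\<delta> * c) *\<^sub>R (c *\<^sub>R (A *v x (Suc k)) - r)) \<bullet> (A *v v)"
      by (simp add: inner_add_left)
    also have "\<dots> = (ls + (1 / \<eta>) *\<^sub>R vl) \<bullet> (A *v v)" using pc cl by simp
    also have "\<dots> = ls \<bullet> (A *v v) + (1/\<delta>) * ((lam (Suc k) - lb) \<bullet> vl)"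
      unfolding inner_add_left
      using eta0 delta by (subst (2) lam1) (simp add: inner_commute)
    finally show ?thesis using Z2 unfolding r1_def by linarith
  qed
  define H1 where "H1 = aug_lag f A b \<beta> (x (Suc k)) ls - aug_lag f A b \<beta> xs ls"
  define Hk where "Hk = aug_lag f A b \<beta> (x k) ls - aug_lag f A b \<beta> xs ls"
  have H1_eq: "H1 = f (x (Suc k)) + ls \<bullet> r1 + \<beta> / 2 * (norm r1)\<^sup>2 - f xs"
    by (simp add: H1_def aug_lag_def r1_def Axs)
  have Hk_eq: "Hk = f (x k) + ls \<bullet> rk + \<beta> / 2 * (norm rk)\<^sup>2 - f xs"
    by (simp add: Hk_def aug_lag_def rk_def Axs)
  have Hk_nn: "Hk \<ge> 0"
  proof -
    have "f xs + g xs \<bullet> (x k - xs) \<le> f (x k)" by (rule grad_ineq[OF f_convex f_grad])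
    moreover have "g xs \<bullet> (x k - xs) = - (ls \<bullet> rk)"
      unfolding gxs' rk_def by (simp add: matrix_vector_mult_diff_distrib Axs)
    moreover have "0 \<le> \<beta> / 2 * (norm rk)\<^sup>2" using beta by simp
    ultimately show ?thesis unfolding Hk_eq by linarith
  qed
  have beta_part: "\<beta> * (r1 \<bullet> (A *v v)) - \<beta> / 2 * (T * (norm r1)\<^sup>2 - (T - \<eta>) * (norm rk)\<^sup>2) \<ge> 0"
  proof -
    have "\<beta> * (r1 \<bullet> (A *v v)) - \<beta> / 2 * (T * (norm r1)\<^sup>2 - (T - \<eta>) * (norm rk)\<^sup>2)
        = \<beta> / 2 * ((T - \<eta>) * ((r1 - rk) \<bullet> (r1 - rk)) + \<eta> * (r1 \<bullet> r1))"
      unfolding Av power2_norm_eq_inner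
      by (simp add: inner_diff_left inner_diff_right inner_commute algebra_simps)
    moreover have "0 \<le> (T - \<eta>) * ((r1 - rk) \<bullet> (r1 - rk)) + \<eta> * (r1 \<bullet> r1)"
      using Teta eta0 by (intro add_nonneg_nonneg mult_nonneg_nonneg) auto
    then have "0 \<le> \<beta> / 2 * ((T - \<eta>) * ((r1 - rk) \<bullet> (r1 - rk)) + \<eta> * (r1 \<bullet> r1))"
      using beta by simp
    ultimately show ?thesis by linarith
  qed
  have lsAv: "ls \<bullet> (A *v v) = T * (ls \<bullet> r1) - (T - \<eta>) * (ls \<bullet> rk)"
    unfolding Av by (simp add: inner_diff_right)
  define Phx where "Phx = - ((x (Suc k) - xb) \<bullet> v) + T / 2 * (norm (x (Suc k) - xb))\<^sup>2"
  define Phl where "Phl = - ((lam (Suc k) - lb) \<bullet> vl) + T / 2 * (norm (lam (Suc k) - lb))\<^sup>2"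
  have Phx_eq: "(1/\<gamma>) * Phx = - ((1/\<gamma>) * ((x (Suc k) - xb) \<bullet> v)) + T / (2 * \<gamma>) * (norm (x (Suc k) - xb))\<^sup>2"
    unfolding Phx_def by (simp add: algebra_simps)
  have Phl_ge: "(1/\<delta>) * Phl \<ge> - ((1/\<delta>) * ((lam (Suc k) - lb) \<bullet> vl))"
  proof -
    have "(1/\<delta>) * Phl = - ((1/\<delta>) * ((lam (Suc k) - lb) \<bullet> vl)) + (1/\<delta>) * (T / 2 * (norm (lam (Suc k) - lb))\<^sup>2)"
      unfolding Phl_def by (simp add: algebra_simps)
    moreover have "0 \<le> (1/\<delta>) * (T / 2 * (norm (lam (Suc k) - lb))\<^sup>2)" using delta Tpos by simp
    ultimately show ?thesis by linarith
  qed
  have Texp: "T * H1 - (T - \<eta>) * Hk = ((T - \<eta>) * (f (x (Suc k)) - f (x k)) + \<eta> * (f (x (Suc k)) - f xs))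
      + (T * (ls \<bullet> r1) - (T - \<eta>) * (ls \<bullet> rk)) + \<beta> / 2 * (T * (norm r1)\<^sup>2 - (T - \<eta>) * (norm rk)\<^sup>2)"
    unfolding H1_eq Hk_eq by (simp add: field_simps)
  have T1ineq: "T * H1 - (T - \<eta>) * Hk \<le> (1/\<gamma>) * Phx + (1/\<delta>) * Phl"
    using Texp Z1 Z2' beta_part lsAv Phx_eq Phl_ge by linarith
  have CX: "T * Phx + (1/2 * (norm (\<eta> *\<^sub>R (x (Suc k) - xs) + (T - 1) *\<^sub>R (x (Suc k) - x k)))\<^sup>2
        + \<eta> * (1 - \<eta>) / 2 * (norm (x (Suc k) - xs))\<^sup>2)
      - (1/2 * (norm (\<eta> *\<^sub>R (x k - xs) + (S - 1) *\<^sub>R (x k - x (k - 1))))\<^sup>2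
        + \<eta> * (1 - \<eta>) / 2 * (norm (x k - xs))\<^sup>2)
      = -(1 - \<eta>) * (T - 1/2) * (norm (x (Suc k) - x k))\<^sup>2"
    using comp_id[OF Tpos, of "x (Suc k)" "x k" S "x (k - 1)" \<eta> xs]
    unfolding Phx_def xb_def v_def T_def S_def by simp
  have CL: "T * Phl + (1/2 * (norm (\<eta> *\<^sub>R (lam (Suc k) - ls) + (T - 1) *\<^sub>R (lam (Suc k) - lam k)))\<^sup>2
        + \<eta> * (1 - \<eta>) / 2 * (norm (lam (Suc k) - ls))\<^sup>2)
      - (1/2 * (norm (\<eta> *\<^sub>R (lam k - ls) + (S - 1) *\<^sub>R (lam k - lam (k - 1))))\<^sup>2
        + \<eta> * (1 - \<eta>) / 2 * (norm (lam k - ls))\<^sup>2)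
      = -(1 - \<eta>) * (T - 1/2) * (norm (lam (Suc k) - lam k))\<^sup>2"
    using comp_id[OF Tpos, of "lam (Suc k)" "lam k" S "lam (k - 1)" \<eta> ls]
    unfolding Phl_def lb_def vl_def T_def S_def by simp
  have g_a: "T\<^sup>2 * H1 - S\<^sup>2 * Hk \<le> T * (T * H1 - (T - \<eta>) * Hk) + (\<rho> - \<eta>) * T * Hk"
  proof -
    have "(T\<^sup>2 - S\<^sup>2 - \<rho> * T) * Hk \<le> 0"
      using t_rate[OF k] Hk_nn unfolding T_def S_def by (intro mult_nonpos_nonneg) auto
    moreover have "T * (T * H1 - (T - \<eta>) * Hk) + (\<rho> - \<eta>) * T * Hk - (T\<^sup>2 * H1 - S\<^sup>2 * Hk)
        = - ((T\<^sup>2 - S\<^sup>2 - \<rho> * T) * Hk)" by (simp add: algebra_simps power2_eq_square)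
    ultimately show ?thesis by linarith
  qed
  have g_b: "T * (T * H1 - (T - \<eta>) * Hk) \<le> T * ((1/\<gamma>) * Phx + (1/\<delta>) * Phl)"
    using T1ineq Tpos by (intro mult_left_mono) auto
  have g_c: "T * ((1/\<gamma>) * Phx + (1/\<delta>) * Phl) = (1/\<gamma>) * (T * Phx) + (1/\<delta>) * (T * Phl)"
    by (simp add: algebra_simps)
  define BB1 where "BB1 = 1 / 2 * Mnorm2 \<gamma> \<delta>
                    (\<eta> *\<^sub>R (x (Suc k) - xs) + (T - 1) *\<^sub>R (x (Suc k) - x k))
                    (\<eta> *\<^sub>R (lam (Suc k) - ls) + (T - 1) *\<^sub>R (lam (Suc k) - lam k))
                  + \<eta> * (1 - \<eta>) / 2 * Mnorm2 \<gamma> \<delta> (x (Suc k) - xs) (lam (Suc k) - ls)"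
  define BBk where "BBk = 1 / 2 * Mnorm2 \<gamma> \<delta>
                    (\<eta> *\<^sub>R (x k - xs) + (S - 1) *\<^sub>R (x k - x (k - 1)))
                    (\<eta> *\<^sub>R (lam k - ls) + (S - 1) *\<^sub>R (lam k - lam (k - 1)))
                  + \<eta> * (1 - \<eta>) / 2 * Mnorm2 \<gamma> \<delta> (x k - xs) (lam k - ls)"
  have CX': "T * Phx = -(1 - \<eta>) * (T - 1/2) * (norm (x (Suc k) - x k))\<^sup>2
      - (1/2 * (norm (\<eta> *\<^sub>R (x (Suc k) - xs) + (T - 1) *\<^sub>R (x (Suc k) - x k)))\<^sup>2
        + \<eta> * (1 - \<eta>) / 2 * (norm (x (Suc k) - xs))\<^sup>2)
      + (1/2 * (norm (\<eta> *\<^sub>R (x k - xs) + (S - 1) *\<^sub>R (x k - x (k - 1))))\<^sup>2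
        + \<eta> * (1 - \<eta>) / 2 * (norm (x k - xs))\<^sup>2)" using CX by linarith
  have CL': "T * Phl = -(1 - \<eta>) * (T - 1/2) * (norm (lam (Suc k) - lam k))\<^sup>2
      - (1/2 * (norm (\<eta> *\<^sub>R (lam (Suc k) - ls) + (T - 1) *\<^sub>R (lam (Suc k) - lam k)))\<^sup>2
        + \<eta> * (1 - \<eta>) / 2 * (norm (lam (Suc k) - ls))\<^sup>2)
      + (1/2 * (norm (\<eta> *\<^sub>R (lam k - ls) + (S - 1) *\<^sub>R (lam k - lam (k - 1))))\<^sup>2
        + \<eta> * (1 - \<eta>) / 2 * (norm (lam k - ls))\<^sup>2)" using CL by linarith
  have g_d: "(1/\<gamma>) * (T * Phx) + (1/\<delta>) * (T * Phl) + (BB1 - BBk)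
      = - (1 - \<eta>) * (T - 1 / 2) * Mnorm2 \<gamma> \<delta> (x (Suc k) - x k) (lam (Suc k) - lam k)"
    unfolding CX' CL' BB1_def BBk_def Mnorm2_def using gamma delta by (simp add: field_simps)
  have goal: "(T\<^sup>2 * H1 + BB1) - (S\<^sup>2 * Hk + BBk) \<le> (\<rho> - \<eta>) * T * Hk
      - (1 - \<eta>) * (T - 1 / 2) * Mnorm2 \<gamma> \<delta> (x (Suc k) - x k) (lam (Suc k) - lam k)"
    using g_a g_b g_c g_d by linarith
  then show "let H = (\<lambda>j. aug_lag f A b \<beta> (x j) ls - aug_lag f A b \<beta> xs ls);
         B = (\<lambda>j. 1 / 2 * Mnorm2 \<gamma> \<delta>
                    (\<eta> *\<^sub>R (x j - xs) + (t j - 1) *\<^sub>R (x j - x (j - 1)))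
                    (\<eta> *\<^sub>R (lam j - ls) + (t j - 1) *\<^sub>R (lam j - lam (j - 1)))
                  + \<eta> * (1 - \<eta>) / 2 * Mnorm2 \<gamma> \<delta> (x j - xs) (lam j - ls));
         E = (\<lambda>j. (t j)\<^sup>2 * H j + B j)
     in E (Suc k) - E k \<le> (\<rho> - \<eta>) * t (Suc k) * H k
          - (1 - \<eta>) * (t (Suc k) - 1 / 2) * Mnorm2 \<gamma> \<delta> (x (Suc k) - x k) (lam (Suc k) - lam k)"
    unfolding Let_def H1_def Hk_def BB1_def BBk_def T_def S_def by simp
qed

end
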